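(* Let $K\ge2$, $\varepsilon\in(0,1]$ and $T\ge 3K/32$. In prediction with limited advice with one additional observation per round, for every (possibly randomized) learning algorithm there exists an oblivious loss sequence with losses in $[0,1]$ and effective loss range at most $\varepsilon$ such that the expected regret satisfies $\mathcal{R}_T\ge 0.02\,\varepsilon\sqrt{KT}$; that is, $\inf\sup\mathcal R_T\ge 0.02\varepsilon\sqrt{KT}$, with the infimum over algorithms and the supremum over such oblivious loss sequences.
   Context: Setting: there are $K$ arms, $[K]=\{1,\dots,K\}$, and losses $\ell_t^a\in[0,1]$. In each round $t$ the learner picks a primary arm $A_t\in[K]$, suffers and observes $\ell_t^{A_t}$, and additionally picks a secondary arm $B_t$ and observes, but does not suffer, $\ell_t^{B_t}$; choices may depend on all past observations and internal randomization. An oblivious adversary fixes all losses before the game starts. The effective loss range is the smallest $\varepsilon$ such that $|\ell_t^a-\ell_t^{a'}|\le\varepsilon$ for all $t\le T$ and $a,a'\in[K]$. The expected regret is $\mathcal{R}_T=\mathbb{E}[\sum_{t=1}^T\ell_t^{A_t}]-\min_{a\in[K]}\mathbb{E}[\sum_{t=1}^T\ell_t^a]$. *)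

theory Defs
  imports "HOL-Probability.Probability"
begin

text \<open>Arms are the naturals 1..K; rounds are indexed 0..T-1.
  A loss sequence is l :: nat => nat => real, with l t a the loss of arm a in round t.
  A history entry records (A_s, B_s, loss of A_s, loss of B_s).
  A (possibly randomized) algorithm is given, in round t and history h of the
  observations so far, a probability distribution over pairs (A_t, B_t)
  (primary arm, secondary arm).  Fresh internal randomness in each round
  conditioned on the full observed history (which includes the own past choices)
  is, for a finite horizon with perfect recall, as general as any randomized
  algorithm (Kuhn).\<close>

type_synonym hist = "(nat \<times> nat \<times> real \<times> real) list"
type_synonym algo = "nat \<Rightarrow> hist \<Rightarrow> (nat \<times> nat) pmf"

definition valid_algo :: "nat \<Rightarrow> algo \<Rightarrow> bool" where
  "valid_algo K alg \<longleftrightarrow> (\<forall>t h. set_pmf (alg t h) \<subseteq> {1..K} \<times> {1..K})"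

fun hist_dist :: "algo \<Rightarrow> (nat \<Rightarrow> nat \<Rightarrow> real) \<Rightarrow> nat \<Rightarrow> hist pmf" where
  "hist_dist alg l 0 = return_pmf []"
| "hist_dist alg l (Suc t) =
     bind_pmf (hist_dist alg l t)
       (\<lambda>h. map_pmf (\<lambda>(a, b). h @ [(a, b, l t a, l t b)]) (alg t h))"

definition losses_01 :: "nat \<Rightarrow> nat \<Rightarrow> (nat \<Rightarrow> nat \<Rightarrow> real) \<Rightarrow> bool" where
  "losses_01 K T l \<longleftrightarrow> (\<forall>t<T. \<forall>a\<in>{1..K}. 0 \<le> l t a \<and> l t a \<le> 1)"

definition loss_range_le :: "nat \<Rightarrow> nat \<Rightarrow> (nat \<Rightarrow> nat \<Rightarrow> real) \<Rightarrow> real \<Rightarrow> bool" where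
  "loss_range_le K T l eps \<longleftrightarrow>
     (\<forall>t<T. \<forall>a\<in>{1..K}. \<forall>a'\<in>{1..K}. \<bar>l t a - l t a'\<bar> \<le> eps)"

definition regret :: "nat \<Rightarrow> nat \<Rightarrow> algo \<Rightarrow> (nat \<Rightarrow> nat \<Rightarrow> real) \<Rightarrow> real" where
  "regret K T alg l =
     measure_pmf.expectation (hist_dist alg l T)
       (\<lambda>h. \<Sum>t<T. l t (fst (h ! t)))
     - (MIN a\<in>{1..K}. \<Sum>t<T. l t a)"

end

theory Submission
  imports Defs
begin


definition Exp :: "'a pmf \<Rightarrow> ('a \<Rightarrow> real) \<Rightarrow> real" where
  "Exp P f = (\<Sum>x\<in>set_pmf P. pmf P x * f x)"

lemma Ex_superset:
  assumes "finite A" "set_pmf P \<subseteq> A"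
  shows "Exp P f = (\<Sum>x\<in>A. pmf P x * f x)"
  unfolding Exp_def using assms
  by (intro sum.mono_neutral_left) (auto simp: set_pmf_eq)

lemma Ex_expectation:
  assumes "finite (set_pmf P)"
  shows "measure_pmf.expectation P f = Exp P f"
  unfolding Exp_def using assms
  by (subst integral_measure_pmf_real[where A="set_pmf P"]) (auto simp: mult.commute)

lemma Ex_cong: "(\<And>x. x \<in> set_pmf P \<Longrightarrow> f x = g x) \<Longrightarrow> Exp P f = Exp P g"
  unfolding Exp_def by (intro sum.cong) auto

lemma Ex_const: "finite (set_pmf P) \<Longrightarrow> Exp P (\<lambda>_. c) = c"
  unfolding Exp_def using sum_pmf_eq_1[of "set_pmf P" P]
  by (simp add: sum_distrib_right[symmetric])

lemma Ex_add: "Exp P (\<lambda>x. f x + g x) = Exp P f + Exp P g"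
  unfolding Exp_def by (simp add: distrib_left sum.distrib)

lemma Ex_diff: "Exp P (\<lambda>x. f x - g x) = Exp P f - Exp P g"
  unfolding Exp_def by (simp add: right_diff_distrib sum_subtractf)

lemma Ex_cmult: "Exp P (\<lambda>x. c * f x) = c * Exp P f"
  unfolding Exp_def by (simp add: sum_distrib_left algebra_simps)

lemma Ex_sum: "Exp P (\<lambda>x. \<Sum>i\<in>I. f i x) = (\<Sum>i\<in>I. Exp P (f i))"
  unfolding Exp_def by (simp add: sum_distrib_left sum.swap[of _ I])

lemma Ex_mono: "(\<And>x. x \<in> set_pmf P \<Longrightarrow> f x \<le> g x) \<Longrightarrow> Exp P f \<le> Exp P g"
  unfolding Exp_def by (intro sum_mono mult_left_mono) auto

lemma Ex_return [simp]: "Exp (return_pmf x) f = f x"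
  unfolding Exp_def by simp

lemma Ex_map:
  assumes "finite (set_pmf P)"
  shows "Exp (map_pmf g P) f = Exp P (\<lambda>x. f (g x))"
  using assms by (simp add: Ex_expectation[symmetric])

lemma pmf_bind_sum:
  assumes "finite (set_pmf P)"
  shows "pmf (bind_pmf P F) y = (\<Sum>x\<in>set_pmf P. pmf P x * pmf (F x) y)"
  using assms by (simp add: pmf_bind Ex_expectation Exp_def)

lemma finite_bind:
  assumes "finite (set_pmf P)" "\<And>x. x \<in> set_pmf P \<Longrightarrow> finite (set_pmf (F x))"
  shows "finite (set_pmf (bind_pmf P F))"
  using assms by auto

lemma Ex_bind:
  assumes "finite (set_pmf P)" "\<And>x. x \<in> set_pmf P \<Longrightarrow> finite (set_pmf (F x))"
  shows "Exp (bind_pmf P F) g = Exp P (\<lambda>x. Exp (F x) g)"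
proof -
  let ?S = "set_pmf (bind_pmf P F)"
  have fS: "finite ?S" using assms by auto
  have "Exp (bind_pmf P F) g = (\<Sum>y\<in>?S. (\<Sum>x\<in>set_pmf P. pmf P x * pmf (F x) y) * g y)"
    unfolding Exp_def using assms(1) by (simp add: pmf_bind_sum)
  also have "\<dots> = (\<Sum>x\<in>set_pmf P. pmf P x * (\<Sum>y\<in>?S. pmf (F x) y * g y))"
    by (simp add: sum_distrib_right sum_distrib_left mult.assoc) (rule sum.swap)
  also have "\<dots> = Exp P (\<lambda>x. Exp (F x) g)"
  proof -
    have "\<And>x. x \<in> set_pmf P \<Longrightarrow> (\<Sum>y\<in>?S. pmf (F x) y * g y) = Exp (F x) g"
      by (rule Ex_superset[symmetric, OF fS]) auto
    then show ?thesis unfolding Exp_def[of P] by (intro sum.cong) auto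
  qed
  finally show ?thesis .
qed

definition KL :: "'a pmf \<Rightarrow> 'a pmf \<Rightarrow> real" where
  "KL P Q = Exp P (\<lambda>x. ln (pmf P x / pmf Q x))"

lemma pmf_bind_key:
  assumes fin: "finite (set_pmf P)"
    and kF: "\<And>x y. x \<in> set_pmf P \<Longrightarrow> y \<in> set_pmf (F x) \<Longrightarrow> k y = x"
    and x0: "x0 \<in> set_pmf P" "k y = x0"
  shows "pmf (bind_pmf P F) y = pmf P x0 * pmf (F x0) y"
proof -
  have "pmf (bind_pmf P F) y = (\<Sum>x\<in>set_pmf P. pmf P x * pmf (F x) y)"
    by (rule pmf_bind_sum[OF fin])
  also have "\<dots> = pmf P x0 * pmf (F x0) y + (\<Sum>x\<in>set_pmf P - {x0}. pmf P x * pmf (F x) y)"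
    by (rule sum.remove[OF fin x0(1)])
  also have "(\<Sum>x\<in>set_pmf P - {x0}. pmf P x * pmf (F x) y) = 0"
  proof (rule sum.neutral, intro ballI)
    fix x assume "x \<in> set_pmf P - {x0}"
    then have "y \<notin> set_pmf (F x)" using kF x0 by blast
    then show "pmf P x * pmf (F x) y = 0" by (simp add: set_pmf_eq)
  qed
  finally show ?thesis by simp
qed

lemma KL_bind:
  assumes fin: "finite (set_pmf P)"
    and sPQ: "set_pmf Q = set_pmf P"
    and finF: "\<And>x. x \<in> set_pmf P \<Longrightarrow> finite (set_pmf (F x))"
    and sFG: "\<And>x. x \<in> set_pmf P \<Longrightarrow> set_pmf (G x) = set_pmf (F x)"
    and kF: "\<And>x y. x \<in> set_pmf P \<Longrightarrow> y \<in> set_pmf (F x) \<Longrightarrow> k y = x"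
  shows "KL (bind_pmf P F) (bind_pmf Q G) = KL P Q + Exp P (\<lambda>x. KL (F x) (G x))"
proof -
  have finQ: "finite (set_pmf Q)" using fin sPQ by simp
  have kG: "\<And>x y. x \<in> set_pmf Q \<Longrightarrow> y \<in> set_pmf (G x) \<Longrightarrow> k y = x"
    using kF sFG sPQ by auto
  have "KL (bind_pmf P F) (bind_pmf Q G) =
      Exp P (\<lambda>x. Exp (F x) (\<lambda>y. ln (pmf (bind_pmf P F) y / pmf (bind_pmf Q G) y)))"
    unfolding KL_def by (rule Ex_bind[OF fin finF])
  also have "\<dots> = Exp P (\<lambda>x. Exp (F x) (\<lambda>y. ln (pmf P x / pmf Q x) + ln (pmf (F x) y / pmf (G x) y)))"
  proof (intro Ex_cong)
    fix x y assume x: "x \<in> set_pmf P" and y: "y \<in> set_pmf (F x)"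
    have k: "k y = x" using kF x y .
    have xQ: "x \<in> set_pmf Q" using x sPQ by simp
    have yG: "y \<in> set_pmf (G x)" using y sFG x by simp
    have 1: "pmf (bind_pmf P F) y = pmf P x * pmf (F x) y"
      using pmf_bind_key[where P=P and F=F and k=k, OF fin kF x k] .
    have 2: "pmf (bind_pmf Q G) y = pmf Q x * pmf (G x) y"
      using pmf_bind_key[where P=Q and F=G and k=k, OF finQ kG xQ k] .
    have p: "pmf P x > 0" "pmf Q x > 0" "pmf (F x) y > 0" "pmf (G x) y > 0"
      using x xQ y yG by (auto simp: set_pmf_eq' less_le pmf_nonneg)
    show "ln (pmf (bind_pmf P F) y / pmf (bind_pmf Q G) y) =
          ln (pmf P x / pmf Q x) + ln (pmf (F x) y / pmf (G x) y)"
      unfolding 1 2 using p by (simp add: ln_mult ln_div)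
  qed
  also have "\<dots> = Exp P (\<lambda>x. ln (pmf P x / pmf Q x) + KL (F x) (G x))"
    unfolding KL_def by (intro Ex_cong) (simp add: Ex_add Ex_const finF)
  also have "\<dots> = KL P Q + Exp P (\<lambda>x. KL (F x) (G x))"
    unfolding KL_def by (simp add: Ex_add)
  finally show ?thesis .
qed

lemma KL_map:
  assumes "inj f" "finite (set_pmf P)"
  shows "KL (map_pmf f P) (map_pmf f Q) = KL P Q"
  unfolding KL_def using assms by (simp add: Ex_map pmf_map_inj')

lemma KL_self [simp]: "KL P P = 0"
  unfolding KL_def Exp_def by (intro sum.neutral) (auto simp: set_pmf_eq)

lemma KL_return [simp]: "KL (return_pmf x) (return_pmf x) = 0"
  by simp



lemma sq_diff_sqrt: "0 \<le> a \<Longrightarrow> 0 \<le> (b::real) \<Longrightarrow> (sqrt a - sqrt b)\<^sup>2 = a + b - 2 * (sqrt b * sqrt a)"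
  by (simp add: power2_diff)
lemma sq_sum_sqrt: "0 \<le> a \<Longrightarrow> 0 \<le> (b::real) \<Longrightarrow> (sqrt a + sqrt b)\<^sup>2 = a + b + 2 * (sqrt b * sqrt a)"
  by (simp add: power2_sum)
lemma gm_sqrt: assumes "0 \<le> a" "0 \<le> (b::real)" shows "sqrt a * sqrt b \<le> (a + b) / 2"
proof -
  have "0 \<le> (sqrt a - sqrt b)\<^sup>2" by simp
  then have "0 \<le> a + b - 2 * (sqrt b * sqrt a)" using sq_diff_sqrt[OF assms] by simp
  then show ?thesis by (simp add: mult.commute)
qed

lemma tv_KL:
  assumes fin: "finite (set_pmf P)" and sPQ: "set_pmf Q = set_pmf P"
    and f: "\<And>x. x \<in> set_pmf P \<Longrightarrow> 0 \<le> f x \<and> f x \<le> 1"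
  shows "Exp Q f - Exp P f \<le> sqrt (KL P Q)"
proof -
  define S where "S = set_pmf P"
  define p where "p = pmf P"
  define q where "q = pmf Q"
  have finS: "finite S" using fin S_def by simp
  have pos: "\<And>x. x \<in> S \<Longrightarrow> p x > 0 \<and> q x > 0"
    using sPQ unfolding S_def p_def q_def by (auto simp: set_pmf_eq' less_le pmf_nonneg)
  have sp: "(\<Sum>x\<in>S. p x) = 1" unfolding S_def p_def by (rule sum_pmf_eq_1) (use fin in auto)
  have sq: "(\<Sum>x\<in>S. q x) = 1" unfolding S_def q_def by (rule sum_pmf_eq_1) (use fin sPQ in auto)
  define BC where "BC = (\<Sum>x\<in>S. sqrt (p x) * sqrt (q x))"
  have "Exp Q f - Exp P f = (\<Sum>x\<in>S. (q x - p x) * f x)"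
    unfolding Exp_def S_def p_def q_def sPQ by (simp add: sum_subtractf left_diff_distrib)
  also have "\<dots> \<le> (\<Sum>x\<in>S. ((q x - p x) + \<bar>q x - p x\<bar>) / 2)"
  proof (rule sum_mono)
    fix x assume x: "x \<in> S"
    have "0 \<le> f x" "f x \<le> 1" using f x S_def by auto
    then show "(q x - p x) * f x \<le> ((q x - p x) + \<bar>q x - p x\<bar>) / 2"
    proof (cases "q x \<ge> p x")
      case True
      then have "(q x - p x) * f x \<le> (q x - p x) * 1" using \<open>f x \<le> 1\<close> by (intro mult_left_mono) auto
      then show ?thesis using True by simp
    next
      case False
      then have "(q x - p x) * f x \<le> 0" using \<open>0 \<le> f x\<close> by (intro mult_nonpos_nonneg) auto
      then show ?thesis using False by simp
    qed
  qed
  also have "\<dots> = (\<Sum>x\<in>S. \<bar>q x - p x\<bar>) / 2"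
    by (simp add: sum_divide_distrib[symmetric] sum.distrib sum_subtractf sp sq)
  finally have 1: "Exp Q f - Exp P f \<le> (\<Sum>x\<in>S. \<bar>q x - p x\<bar>) / 2" .
  have 2: "(\<Sum>x\<in>S. \<bar>q x - p x\<bar>)\<^sup>2 \<le> (\<Sum>x\<in>S. (sqrt (q x) - sqrt (p x))\<^sup>2) * (\<Sum>x\<in>S. (sqrt (q x) + sqrt (p x))\<^sup>2)"
  proof -
    have "(\<Sum>x\<in>S. \<bar>q x - p x\<bar>) = (\<Sum>x\<in>S. \<bar>sqrt (q x) - sqrt (p x)\<bar> * (sqrt (q x) + sqrt (p x)))"
    proof (rule sum.cong[OF refl])
      fix x assume "x \<in> S"
      then have "q x \<ge> 0" "p x \<ge> 0" using pos by force+
      then have "q x - p x = (sqrt (q x) - sqrt (p x)) * (sqrt (q x) + sqrt (p x))"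
        by (simp add: algebra_simps)
      then have "\<bar>q x - p x\<bar> = \<bar>sqrt (q x) - sqrt (p x)\<bar> * \<bar>sqrt (q x) + sqrt (p x)\<bar>"
        by (simp only: abs_mult)
      moreover have "\<bar>sqrt (q x) + sqrt (p x)\<bar> = sqrt (q x) + sqrt (p x)"
        using \<open>q x \<ge> 0\<close> \<open>p x \<ge> 0\<close> by simp
      ultimately show "\<bar>q x - p x\<bar> = \<bar>sqrt (q x) - sqrt (p x)\<bar> * (sqrt (q x) + sqrt (p x))"
        by simp
    qed
    also have "(\<dots>)\<^sup>2 \<le> (\<Sum>x\<in>S. \<bar>sqrt (q x) - sqrt (p x)\<bar>\<^sup>2) * (\<Sum>x\<in>S. (sqrt (q x) + sqrt (p x))\<^sup>2)"
      by (rule Cauchy_Schwarz_ineq_sum)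
    finally show ?thesis by simp
  qed
  have 3: "(\<Sum>x\<in>S. (sqrt (q x) - sqrt (p x))\<^sup>2) = 2 - 2 * BC"
  proof -
    have "(\<Sum>x\<in>S. (sqrt (q x) - sqrt (p x))\<^sup>2) = (\<Sum>x\<in>S. q x + p x - 2 * (sqrt (p x) * sqrt (q x)))"
      using pos by (intro sum.cong refl sq_diff_sqrt) (auto intro: less_imp_le)
    then show ?thesis unfolding BC_def by (simp add: sum.distrib sum_subtractf sum_distrib_left sp sq)
  qed
  have 4: "(\<Sum>x\<in>S. (sqrt (q x) + sqrt (p x))\<^sup>2) = 2 + 2 * BC"
  proof -
    have "(\<Sum>x\<in>S. (sqrt (q x) + sqrt (p x))\<^sup>2) = (\<Sum>x\<in>S. q x + p x + 2 * (sqrt (p x) * sqrt (q x)))"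
      using pos by (intro sum.cong refl sq_sum_sqrt) (auto intro: less_imp_le)
    then show ?thesis unfolding BC_def by (simp add: sum.distrib sum_distrib_left sp sq)
  qed
  have BC1: "BC \<le> 1"
  proof -
    have "BC \<le> (\<Sum>x\<in>S. (p x + q x) / 2)"
      unfolding BC_def
    proof (rule sum_mono)
      fix x assume "x \<in> S"
      then have "p x \<ge> 0" "q x \<ge> 0" using pos by force+
      then show "sqrt (p x) * sqrt (q x) \<le> (p x + q x) / 2"
        by (rule gm_sqrt)
    qed
    also have "\<dots> = 1" by (simp add: sum_divide_distrib[symmetric] sum.distrib sp sq)
    finally show ?thesis .
  qed
  have BC0: "BC \<ge> 0" unfolding BC_def using pos by (intro sum_nonneg) (auto intro: less_imp_le)
  have 5: "2 - 2 * BC \<le> KL P Q"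
  proof -
    have "KL P Q = (\<Sum>x\<in>S. p x * ln (p x / q x))"
      unfolding KL_def Exp_def S_def p_def q_def ..
    also have "\<dots> \<ge> (\<Sum>x\<in>S. 2 * (p x - sqrt (p x) * sqrt (q x)))"
    proof (rule sum_mono)
      fix x assume "x \<in> S"
      then have pp: "p x > 0" "q x > 0" using pos by auto
      define r where "r = sqrt (q x) / sqrt (p x)"
      have r: "r > 0" using pp r_def by simp
      have "ln (p x / q x) = - 2 * ln r"
        using pp unfolding r_def by (simp add: ln_div ln_sqrt)
      moreover have "ln r \<le> r - 1" using r by (rule ln_le_minus_one)
      ultimately have "ln (p x / q x) \<ge> 2 - 2 * r" by simp
      then have "p x * ln (p x / q x) \<ge> p x * (2 - 2 * r)"
        using pp by (intro mult_left_mono) auto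
      moreover have "p x * r = sqrt (p x) * sqrt (q x)"
      proof -
        have e: "sqrt (p x) * sqrt (p x) = p x" using pp by simp
        have sp0: "sqrt (p x) \<noteq> 0" using pp by simp
        have "p x * r = (sqrt (p x) * sqrt (p x)) * (sqrt (q x) / sqrt (p x))"
          unfolding r_def e ..
        also have "\<dots> = sqrt (p x) * sqrt (q x)" using sp0 by (simp add: field_simps)
        finally show ?thesis .
      qed
      ultimately show "2 * (p x - sqrt (p x) * sqrt (q x)) \<le> p x * ln (p x / q x)"
        by (simp add: algebra_simps)
    qed
    finally show ?thesis unfolding BC_def
      by (simp add: sum_subtractf sum_distrib_left[symmetric] sp)
  qed
  define D where "D = (\<Sum>x\<in>S. \<bar>q x - p x\<bar>)"
  have D0: "D \<ge> 0" unfolding D_def by (intro sum_nonneg) auto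
  have "D\<^sup>2 \<le> 4 * KL P Q"
  proof -
    have "D\<^sup>2 \<le> (2 - 2 * BC) * (2 + 2 * BC)" using 2 3 4 D_def by simp
    also have "\<dots> \<le> (2 - 2 * BC) * 4" using BC1 BC0 by (intro mult_left_mono) auto
    also have "\<dots> \<le> KL P Q * 4" using 5 by simp
    finally show ?thesis by simp
  qed
  then have "D \<le> sqrt (4 * KL P Q)" using D0 real_le_rsqrt by blast
  also have "\<dots> = 2 * sqrt (KL P Q)" by (simp add: real_sqrt_mult)
  finally show ?thesis using 1 D_def by simp
qed




locale game =
  fixes K :: nat and alg :: algo and e d :: real
  assumes valid: "valid_algo K alg" and e_pos: "0 < e" and d_pos: "0 < d" and d_lt: "d < 1/2"
begin

definition coin :: "real \<Rightarrow> real pmf" where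
  "coin p = map_pmf (\<lambda>b. if b then e else 0) (bernoulli_pmf p)"

definition cj :: "nat \<Rightarrow> nat \<Rightarrow> real pmf" where
  "cj j a = coin (if a = j then 1/2 - d else 1/2)"

definition step :: "nat \<Rightarrow> nat \<Rightarrow> hist \<Rightarrow> hist pmf" where
  "step j t h = bind_pmf (alg t h) (\<lambda>(a,b). bind_pmf (cj j a)
      (\<lambda>x. map_pmf (\<lambda>y. h @ [(a,b,x,y)]) (if a = b then return_pmf x else cj j b)))"

primrec sdist :: "nat \<Rightarrow> nat \<Rightarrow> hist pmf" where
  "sdist j 0 = return_pmf []"
| "sdist j (Suc t) = bind_pmf (sdist j t) (step j t)"

definition rv :: "nat \<Rightarrow> (nat \<Rightarrow> real) pmf" where
  "rv j = Pi_pmf {1..K} 0 (cj j)"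

primrec lossdist :: "nat \<Rightarrow> nat \<Rightarrow> (nat \<Rightarrow> nat \<Rightarrow> real) pmf" where
  "lossdist j 0 = return_pmf (\<lambda>_ _. 0)"
| "lossdist j (Suc t) = bind_pmf (lossdist j t) (\<lambda>l. map_pmf (\<lambda>v. l(t := v)) (rv j))"

definition nu :: "nat \<Rightarrow> nat \<Rightarrow> hist \<Rightarrow> real" where
  "nu j t h = Exp (alg t h) (\<lambda>(a,b). if a = j then 1 else 0)"

definition pi :: "nat \<Rightarrow> nat \<Rightarrow> hist \<Rightarrow> real" where
  "pi j t h = Exp (alg t h) (\<lambda>(a,b). if a = j \<or> b = j then 1 else 0)"

definition klc :: real where
  "klc = KL (coin (1/2)) (coin (1/2 - d))"

lemma set_coin: "0 < p \<Longrightarrow> p < 1 \<Longrightarrow> set_pmf (coin p) = {0, e}"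
  unfolding coin_def by (auto simp: UNIV_bool)

lemma set_cj [simp]: "set_pmf (cj j a) = {0, e}"
  unfolding cj_def using d_pos d_lt by (intro set_coin) auto

lemma alg_sub: "set_pmf (alg t h) \<subseteq> {1..K} \<times> {1..K}"
  using valid unfolding valid_algo_def by blast

lemma fin_alg [simp]: "finite (set_pmf (alg t h))"
  by (rule finite_subset[OF alg_sub]) auto

lemma set_step: "set_pmf (step j t h) =
   (\<Union>(a,b)\<in>set_pmf (alg t h). \<Union>x\<in>{0,e}. (\<lambda>y. h @ [(a,b,x,y)]) ` (if a = b then {x} else {0,e}))"
  unfolding step_def by (auto simp: split_beta split: if_splits)

lemma fin_step [simp]: "finite (set_pmf (step j t h))"
  unfolding set_step by (auto simp: split_beta)

lemma set_step_indep: "set_pmf (step j t h) = set_pmf (step j' t h)"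
  unfolding set_step ..

lemma step_elem: "y \<in> set_pmf (step j t h) \<Longrightarrow> butlast y = h \<and> length y = Suc (length h)"
  unfolding set_step by (auto split: if_splits)

lemma fin_sdist [simp]: "finite (set_pmf (sdist j t))"
  by (induction t) auto

lemma set_sdist_indep: "set_pmf (sdist j t) = set_pmf (sdist j' t)"
  by (induction t) (auto simp: set_step_indep[of j _ _ j'])

lemma length_sdist: "h \<in> set_pmf (sdist j t) \<Longrightarrow> length h = t"
  by (induction t arbitrary: h) (auto dest: step_elem)


lemma KL_cj: assumes "j \<noteq> 0" "a \<noteq> 0" shows "KL (cj 0 a) (cj j a) = (if a = j then klc else 0)"
  using assms unfolding cj_def klc_def by auto

lemma inj_app: "inj (\<lambda>y. h @ [(a::nat, b::nat, x::real, y::real)])"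
  by (auto simp: inj_def)

lemma KL_inner:
  assumes "j \<noteq> 0" "a \<noteq> 0" "b \<noteq> 0"
  shows "KL (bind_pmf (cj 0 a) (\<lambda>x. map_pmf (\<lambda>y. h @ [(a,b,x,y)]) (if a = b then return_pmf x else cj 0 b)))
            (bind_pmf (cj j a) (\<lambda>x. map_pmf (\<lambda>y. h @ [(a,b,x,y)]) (if a = b then return_pmf x else cj j b)))
         = klc * (if a = j \<or> b = j then 1 else 0)"
proof -
  have "KL (bind_pmf (cj 0 a) (\<lambda>x. map_pmf (\<lambda>y. h @ [(a,b,x,y)]) (if a = b then return_pmf x else cj 0 b)))
            (bind_pmf (cj j a) (\<lambda>x. map_pmf (\<lambda>y. h @ [(a,b,x,y)]) (if a = b then return_pmf x else cj j b)))
      = KL (cj 0 a) (cj j a) + Exp (cj 0 a) (\<lambda>x. KL (map_pmf (\<lambda>y. h @ [(a,b,x,y)]) (if a = b then return_pmf x else cj 0 b))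
            (map_pmf (\<lambda>y. h @ [(a,b,x,y)]) (if a = b then return_pmf x else cj j b)))"
    by (rule KL_bind[where k="\<lambda>y. fst (snd (snd (last y)))"]) auto
  also have "Exp (cj 0 a) (\<lambda>x. KL (map_pmf (\<lambda>y. h @ [(a,b,x,y)]) (if a = b then return_pmf x else cj 0 b))
            (map_pmf (\<lambda>y. h @ [(a,b,x,y)]) (if a = b then return_pmf x else cj j b)))
      = Exp (cj 0 a) (\<lambda>x. if a = b then 0 else KL (cj 0 b) (cj j b))"
    by (intro Ex_cong) (simp add: KL_map[OF inj_app])
  also have "\<dots> = (if a = b then 0 else KL (cj 0 b) (cj j b))"
    by (rule Ex_const) simp
  finally show ?thesis using assms by (simp add: KL_cj)
qed

lemma KL_step:
  assumes "j \<noteq> 0"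
  shows "KL (step 0 t h) (step j t h) = klc * pi j t h"
proof -
  have "KL (step 0 t h) (step j t h) = KL (alg t h) (alg t h) +
     Exp (alg t h) (\<lambda>x. KL ((\<lambda>(a,b). bind_pmf (cj 0 a)
      (\<lambda>x. map_pmf (\<lambda>y. h @ [(a,b,x,y)]) (if a = b then return_pmf x else cj 0 b))) x)
      ((\<lambda>(a,b). bind_pmf (cj j a)
      (\<lambda>x. map_pmf (\<lambda>y. h @ [(a,b,x,y)]) (if a = b then return_pmf x else cj j b))) x))"
    unfolding step_def
    by (rule KL_bind[where k="\<lambda>y. (fst (last y), fst (snd (last y)))"]) (auto simp: split_beta)
  also have "\<dots> = Exp (alg t h) (\<lambda>x. klc * (case x of (a,b) \<Rightarrow> if a = j \<or> b = j then 1 else 0))"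
  proof (simp, intro Ex_cong)
    fix x assume x: "x \<in> set_pmf (alg t h)"
    obtain a b where ab: "x = (a,b)" by (cases x)
    have "a \<noteq> 0" "b \<noteq> 0" using x ab alg_sub by fastforce+
    then show "KL (case x of (a, b) \<Rightarrow> cj 0 a \<bind> (\<lambda>x. map_pmf (\<lambda>y. h @ [(a, b, x, y)]) (if a = b then return_pmf x else cj 0 b)))
              (case x of (a, b) \<Rightarrow> cj j a \<bind> (\<lambda>x. map_pmf (\<lambda>y. h @ [(a, b, x, y)]) (if a = b then return_pmf x else cj j b))) =
          klc * (case x of (a, b) \<Rightarrow> if a = j \<or> b = j then 1 else 0)"
      unfolding ab using KL_inner[OF assms] by simp
  qed
  also have "\<dots> = klc * pi j t h" unfolding pi_def by (simp add: Ex_cmult)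
  finally show ?thesis .
qed

definition W :: "nat \<Rightarrow> nat \<Rightarrow> real" where
  "W j t = (\<Sum>r<t. Exp (sdist 0 r) (pi j r))"

lemma KL_sdist:
  assumes "j \<noteq> 0"
  shows "KL (sdist 0 t) (sdist j t) = klc * W j t"
proof (induction t)
  case 0 then show ?case by (simp add: W_def)
next
  case (Suc t)
  have "KL (sdist 0 (Suc t)) (sdist j (Suc t)) = KL (sdist 0 t) (sdist j t) + Exp (sdist 0 t) (\<lambda>h. KL (step 0 t h) (step j t h))"
    unfolding sdist.simps
    by (rule KL_bind[where k=butlast]) (auto simp: set_sdist_indep[of j _ 0] set_step_indep[of j _ _ 0] dest: step_elem)
  also have "\<dots> = klc * W j t + klc * Exp (sdist 0 t) (pi j t)"
    using Suc by (simp add: KL_step[OF assms] Ex_cmult)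
  finally show ?case by (simp add: W_def distrib_left)
qed


lemma Ex_coin: assumes "0 \<le> p" "p \<le> 1" shows "Exp (coin p) (\<lambda>x. x) = e * p"
proof -
  have "Exp (coin p) (\<lambda>x. x) = Exp (bernoulli_pmf p) (\<lambda>b. if b then e else 0)"
    unfolding coin_def by (rule Ex_map) simp
  also have "\<dots> = (\<Sum>b\<in>UNIV. pmf (bernoulli_pmf p) b * (if b then e else 0))"
    by (rule Ex_superset) auto
  also have "\<dots> = e * p" using assms by (simp add: UNIV_bool)
  finally show ?thesis .
qed

lemma Ex_cj: "Exp (cj j a) (\<lambda>x. x) = e / 2 - e * d * (if a = j then 1 else 0)"
  unfolding cj_def using d_pos d_lt by (subst Ex_coin) (auto simp: algebra_simps)

lemma y_decomp: "y \<in> set_pmf (step j t h) \<Longrightarrow> y = h @ [last y]"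
  using step_elem[of y j t h]
  by (metis append_butlast_last_id length_greater_0_conv zero_less_Suc)

lemma Ex_step_loss:
  assumes "length h = t"
  shows "Exp (step j t h) (\<lambda>y. fst (snd (snd (y ! t)))) = e / 2 - e * d * nu j t h"
proof -
  have "Exp (step j t h) (\<lambda>y. fst (snd (snd (y ! t)))) =
     Exp (alg t h) (\<lambda>x. Exp ((\<lambda>(a,b). bind_pmf (cj j a)
      (\<lambda>x. map_pmf (\<lambda>y. h @ [(a,b,x,y)]) (if a = b then return_pmf x else cj j b))) x) (\<lambda>y. fst (snd (snd (y ! t)))))"
    unfolding step_def by (rule Ex_bind) (auto simp: split_beta)
  also have "\<dots> = Exp (alg t h) (\<lambda>(a,b). e / 2 - e * d * (if a = j then 1 else 0))"
  proof (intro Ex_cong)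
    fix x assume "x \<in> set_pmf (alg t h)"
    obtain a b where ab: "x = (a,b)" by (cases x)
    have "Exp (bind_pmf (cj j a)
      (\<lambda>x. map_pmf (\<lambda>y. h @ [(a,b,x,y)]) (if a = b then return_pmf x else cj j b))) (\<lambda>y. fst (snd (snd (y ! t))))
      = Exp (cj j a) (\<lambda>x. Exp (map_pmf (\<lambda>y. h @ [(a,b,x,y)]) (if a = b then return_pmf x else cj j b)) (\<lambda>y. fst (snd (snd (y ! t)))))"
      by (rule Ex_bind) auto
    also have "\<dots> = Exp (cj j a) (\<lambda>x. x)"
      using assms by (intro Ex_cong) (simp add: Ex_map Ex_const nth_append)
    finally show "Exp ((\<lambda>(a,b). bind_pmf (cj j a)
      (\<lambda>x. map_pmf (\<lambda>y. h @ [(a,b,x,y)]) (if a = b then return_pmf x else cj j b))) x) (\<lambda>y. fst (snd (snd (y ! t))))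
      = (\<lambda>(a,b). e / 2 - e * d * (if a = j then 1 else 0)) x"
      unfolding ab by (simp add: Ex_cj)
  qed
  also have "\<dots> = Exp (alg t h) (\<lambda>x. e / 2 - e * d * (\<lambda>(a,b). if a = j then 1 else 0) x)"
    by (intro Ex_cong) auto
  also have "\<dots> = e / 2 - e * d * nu j t h"
    unfolding nu_def by (simp add: Ex_diff Ex_const Ex_cmult)
  finally show ?thesis .
qed

definition G :: "nat \<Rightarrow> hist \<Rightarrow> real" where
  "G t h = (\<Sum>s<t. fst (snd (snd (h ! s))))"

lemma Ex_G: "Exp (sdist j t) (G t) = e * t / 2 - e * d * (\<Sum>s<t. Exp (sdist j s) (nu j s))"
proof (induction t)
  case 0 then show ?case by (simp add: G_def)
next
  case (Suc t)
  have "Exp (sdist j (Suc t)) (G (Suc t)) = Exp (sdist j t) (\<lambda>h. Exp (step j t h) (G (Suc t)))"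
    unfolding sdist.simps by (rule Ex_bind) auto
  also have "\<dots> = Exp (sdist j t) (\<lambda>h. G t h + (e / 2 - e * d * nu j t h))"
  proof (intro Ex_cong)
    fix h assume h: "h \<in> set_pmf (sdist j t)"
    then have lh: "length h = t" by (rule length_sdist)
    have "Exp (step j t h) (G (Suc t)) = Exp (step j t h) (\<lambda>y. G t h + fst (snd (snd (y ! t))))"
    proof (intro Ex_cong)
      fix y assume "y \<in> set_pmf (step j t h)"
      then have y: "y = h @ [last y]" by (rule y_decomp)
      have "G (Suc t) y = G t y + fst (snd (snd (y ! t)))" unfolding G_def by simp
      also have "G t y = G t h" unfolding G_def
        by (intro sum.cong refl, subst y) (simp add: nth_append lh)
      finally show "G (Suc t) y = G t h + fst (snd (snd (y ! t)))" .
    qed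
    also have "\<dots> = G t h + (e / 2 - e * d * nu j t h)"
      by (simp add: Ex_add Ex_const Ex_step_loss lh)
    finally show "Exp (step j t h) (G (Suc t)) = G t h + (e / 2 - e * d * nu j t h)" .
  qed
  also have "\<dots> = Exp (sdist j t) (G t) + e / 2 - e * d * Exp (sdist j t) (nu j t)"
    by (simp add: Ex_add Ex_diff Ex_const Ex_cmult)
  finally show ?case using Suc by (simp add: algebra_simps)
qed

end



lemma Pi_pair:
  assumes "finite A" "a \<in> A" "b \<in> A"
  shows "map_pmf (\<lambda>v. (v a, v b)) (Pi_pmf A dflt p) =
         bind_pmf (p a) (\<lambda>x. map_pmf (\<lambda>y. (x,y)) (if a = b then return_pmf x else p b))"
proof (cases "a = b")
  case True
  have "map_pmf (\<lambda>v. (v a, v b)) (Pi_pmf A dflt p) = map_pmf (\<lambda>x. (x,x)) (map_pmf (\<lambda>v. v a) (Pi_pmf A dflt p))"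
    using True by (simp add: pmf.map_comp o_def)
  also have "\<dots> = map_pmf (\<lambda>x. (x,x)) (p a)" using assms by (simp add: Pi_pmf_component)
  finally show ?thesis using True by (simp add: map_pmf_def bind_return_pmf)
next
  case False
  have "map_pmf (\<lambda>v. (v a, v b)) (Pi_pmf A dflt p) = map_pmf (\<lambda>v. (v a, v b)) (Pi_pmf {a,b} dflt p)"
    using assms by (subst Pi_pmf_subset[of A "{a,b}"]) (auto simp: pmf.map_comp o_def)
  also have "Pi_pmf {a,b} dflt p = map_pmf (\<lambda>(y,f). f(a:=y)) (pair_pmf (p a) (Pi_pmf {b} dflt p))"
    using False by (subst Pi_pmf_insert[symmetric]) auto
  also have "Pi_pmf {b} dflt p = map_pmf (\<lambda>x z. if z = b then x else dflt) (p b)"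
    by (rule Pi_pmf_singleton)
  finally show ?thesis using False
    by (simp add: pmf.map_comp o_def pair_pmf_def map_bind_pmf bind_map_pmf map_pmf_def bind_assoc_pmf bind_return_pmf)
qed

context game begin

lemma step_alt: "step j t h = bind_pmf (alg t h) (\<lambda>(a,b). map_pmf (\<lambda>v. h @ [(a,b,v a,v b)]) (rv j))"
  unfolding step_def
proof (intro bind_pmf_cong refl)
  fix x assume x: "x \<in> set_pmf (alg t h)"
  obtain a b where ab: "x = (a,b)" by (cases x)
  have "(a,b) \<in> {1..K} \<times> {1..K}" using x ab alg_sub by blast
  then have "a \<in> {1..K}" "b \<in> {1..K}" by (simp_all only: mem_Times_iff fst_conv snd_conv)
  then have "map_pmf (\<lambda>v. (v a, v b)) (rv j) =
         bind_pmf (cj j a) (\<lambda>x. map_pmf (\<lambda>y. (x,y)) (if a = b then return_pmf x else cj j b))"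
    unfolding rv_def by (intro Pi_pair) auto
  then have "map_pmf (\<lambda>(x,y). h @ [(a,b,x,y)]) (map_pmf (\<lambda>v. (v a, v b)) (rv j)) =
      map_pmf (\<lambda>(x,y). h @ [(a,b,x,y)]) (bind_pmf (cj j a) (\<lambda>x. map_pmf (\<lambda>y. (x,y)) (if a = b then return_pmf x else cj j b)))"
    by simp
  then show "(case x of (a, b) \<Rightarrow> cj j a \<bind> (\<lambda>x. map_pmf (\<lambda>y. h @ [(a, b, x, y)]) (if a = b then return_pmf x else cj j b))) =
         (case x of (a, b) \<Rightarrow> map_pmf (\<lambda>v. h @ [(a, b, v a, v b)]) (rv j))"
    unfolding ab by (simp add: pmf.map_comp o_def map_bind_pmf)
qed


lemma hist_dist_cong: "(\<And>s. s < t \<Longrightarrow> l' s = l s) \<Longrightarrow> hist_dist alg l' t = hist_dist alg l t"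
  by (induction t) auto

lemma link: "bind_pmf (lossdist j t) (\<lambda>l. hist_dist alg l t) = sdist j t"
proof (induction t)
  case 0 then show ?case by (simp add: bind_return_pmf)
next
  case (Suc t)
  have inner: "bind_pmf (rv j) (\<lambda>v. map_pmf (\<lambda>(a,b). h @ [(a,b,v a,v b)]) (alg t h)) = step j t h" for h
  proof -
    have "bind_pmf (rv j) (\<lambda>v. map_pmf (\<lambda>(a,b). h @ [(a,b,v a,v b)]) (alg t h)) =
          bind_pmf (rv j) (\<lambda>v. bind_pmf (alg t h) (\<lambda>x. return_pmf ((\<lambda>(a,b). h @ [(a,b,v a,v b)]) x)))"
      by (simp add: map_pmf_def)
    also have "\<dots> = bind_pmf (alg t h) (\<lambda>x. bind_pmf (rv j) (\<lambda>v. return_pmf ((\<lambda>(a,b). h @ [(a,b,v a,v b)]) x)))"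
      by (rule bind_commute_pmf)
    also have "\<dots> = bind_pmf (alg t h) (\<lambda>(a,b). map_pmf (\<lambda>v. h @ [(a,b,v a,v b)]) (rv j))"
      unfolding map_pmf_def by (intro bind_pmf_cong refl) (auto simp: split_beta)
    also have "\<dots> = step j t h" by (simp add: step_alt)
    finally show ?thesis .
  qed
  have "bind_pmf (lossdist j (Suc t)) (\<lambda>l. hist_dist alg l (Suc t)) =
        bind_pmf (lossdist j t) (\<lambda>l. bind_pmf (rv j) (\<lambda>v. hist_dist alg (l(t := v)) (Suc t)))"
    by (simp add: bind_assoc_pmf bind_map_pmf)
  also have "\<dots> = bind_pmf (lossdist j t) (\<lambda>l. bind_pmf (rv j) (\<lambda>v. bind_pmf (hist_dist alg l t)
         (\<lambda>h. map_pmf (\<lambda>(a,b). h @ [(a,b,v a,v b)]) (alg t h))))"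
  proof (intro bind_pmf_cong refl)
    fix l v
    have "hist_dist alg (l(t := v)) t = hist_dist alg l t" by (rule hist_dist_cong) auto
    then show "hist_dist alg (l(t := v)) (Suc t) = bind_pmf (hist_dist alg l t)
         (\<lambda>h. map_pmf (\<lambda>(a,b). h @ [(a,b,v a,v b)]) (alg t h))" by simp
  qed
  also have "\<dots> = bind_pmf (lossdist j t) (\<lambda>l. bind_pmf (hist_dist alg l t) (\<lambda>h.
        bind_pmf (rv j) (\<lambda>v. map_pmf (\<lambda>(a,b). h @ [(a,b,v a,v b)]) (alg t h))))"
    by (subst bind_commute_pmf) (rule refl)
  also have "\<dots> = bind_pmf (lossdist j t) (\<lambda>l. bind_pmf (hist_dist alg l t) (step j t))"
    by (simp add: inner)
  also have "\<dots> = bind_pmf (bind_pmf (lossdist j t) (\<lambda>l. hist_dist alg l t)) (step j t)"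
    by (simp add: bind_assoc_pmf)
  also have "\<dots> = sdist j (Suc t)" using Suc by simp
  finally show ?case .
qed


lemma rv_sub: "set_pmf (rv j) \<subseteq> PiE_dflt {1..K} 0 (set_pmf \<circ> cj j)"
  unfolding rv_def by (rule set_Pi_pmf_subset') simp

lemma fin_rv [simp]: "finite (set_pmf (rv j))"
  by (rule finite_subset[OF rv_sub]) (intro finite_PiE_dflt, auto)

lemma rv_vals: "v \<in> set_pmf (rv j) \<Longrightarrow> v a \<in> {0, e}"
  using rv_sub[of j] unfolding PiE_dflt_def by (cases "a \<in> {1..K}") force+

lemma fin_lossdist [simp]: "finite (set_pmf (lossdist j t))"
  by (induction t) auto

lemma rv_vals': "v \<in> set_pmf (rv j) \<Longrightarrow> v a = 0 \<or> v a = e"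
  using rv_vals by blast

lemma loss_vals: "l \<in> set_pmf (lossdist j t) \<Longrightarrow> l s a \<in> {0, e}"
proof (induction t arbitrary: l)
  case 0 then show ?case by simp
next
  case (Suc t)
  then obtain l' v where l': "l' \<in> set_pmf (lossdist j t)" "v \<in> set_pmf (rv j)" and l: "l = l'(t := v)"
    by auto
  show ?case using Suc.IH[OF l'(1)] rv_vals'[OF l'(2), of a] unfolding l by (cases "s = t") auto
qed

lemma Ex_rv: "j \<in> {1..K} \<Longrightarrow> Exp (rv j) (\<lambda>v. v j) = e / 2 - e * d"
proof -
  assume j: "j \<in> {1..K}"
  have "Exp (rv j) (\<lambda>v. v j) = Exp (map_pmf (\<lambda>v. v j) (rv j)) (\<lambda>x. x)" by (simp add: Ex_map)
  also have "map_pmf (\<lambda>v. v j) (rv j) = cj j j" unfolding rv_def using j by (simp add: Pi_pmf_component)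
  finally show ?thesis by (simp add: Ex_cj)
qed

lemma Ex_lossdist: "j \<in> {1..K} \<Longrightarrow> Exp (lossdist j t) (\<lambda>l. \<Sum>s<t. l s j) = t * (e / 2 - e * d)"
proof (induction t)
  case 0 then show ?case by simp
next
  case (Suc t)
  have "Exp (lossdist j (Suc t)) (\<lambda>l. \<Sum>s<Suc t. l s j) =
     Exp (lossdist j t) (\<lambda>l. Exp (map_pmf (\<lambda>v. l(t := v)) (rv j)) (\<lambda>l. \<Sum>s<Suc t. l s j))"
    unfolding lossdist.simps by (rule Ex_bind) auto
  also have "\<dots> = Exp (lossdist j t) (\<lambda>l. (\<Sum>s<t. l s j) + (e / 2 - e * d))"
  proof (intro Ex_cong)
    fix l
    have "Exp (map_pmf (\<lambda>v. l(t := v)) (rv j)) (\<lambda>l. \<Sum>s<Suc t. l s j) = Exp (rv j) (\<lambda>v. (\<Sum>s<t. l s j) + v j)"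
      by (simp add: Ex_map)
    also have "\<dots> = (\<Sum>s<t. l s j) + (e / 2 - e * d)" using Suc.prems by (simp add: Ex_add Ex_const Ex_rv)
    finally show "Exp (map_pmf (\<lambda>v. l(t := v)) (rv j)) (\<lambda>l. \<Sum>s<Suc t. l s j) = (\<Sum>s<t. l s j) + (e / 2 - e * d)" .
  qed
  also have "\<dots> = Exp (lossdist j t) (\<lambda>l. \<Sum>s<t. l s j) + (e / 2 - e * d)"
    by (subst Ex_add) (simp add: Ex_const)
  also have "\<dots> = Suc t * (e / 2 - e * d)" using Suc by (simp add: algebra_simps)
  finally show ?case .
qed

lemma fin_hist [simp]: "finite (set_pmf (hist_dist alg l t))"
  by (induction t) (auto simp: split_beta)

lemma hist_props: "h \<in> set_pmf (hist_dist alg l t) \<Longrightarrow>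
    length h = t \<and> (\<forall>s<t. fst (snd (snd (h ! s))) = l s (fst (h ! s)))"
proof (induction t arbitrary: h)
  case 0 then show ?case by simp
next
  case (Suc t)
  then obtain h' a b where h': "h' \<in> set_pmf (hist_dist alg l t)" and h: "h = h' @ [(a,b,l t a,l t b)]"
    by (auto simp: split_beta)
  from Suc.IH[OF h'] show ?case unfolding h
    by (auto simp: nth_append less_Suc_eq)
qed

end



context game begin

lemma regret_lower:
  assumes j: "j \<in> {1..K}" and l: "l \<in> set_pmf (lossdist j T)"
  shows "regret K T alg l \<ge> Exp (hist_dist alg l T) (G T) - (\<Sum>s<T. l s j)"
proof -
  have "measure_pmf.expectation (hist_dist alg l T) (\<lambda>h. \<Sum>t<T. l t (fst (h ! t))) = Exp (hist_dist alg l T) (G T)"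
    unfolding Ex_expectation[OF fin_hist] unfolding G_def
    by (intro Ex_cong sum.cong refl) (simp add: hist_props)
  moreover have "(MIN a\<in>{1..K}. \<Sum>t<T. l t a) \<le> (\<Sum>s<T. l s j)"
    using j by (intro Min_le) auto
  ultimately show ?thesis unfolding regret_def by linarith
qed

lemma Ex_regret:
  assumes j: "j \<in> {1..K}"
  shows "Exp (lossdist j T) (regret K T alg) \<ge> e * d * (T - (\<Sum>s<T. Exp (sdist j s) (nu j s)))"
proof -
  have "Exp (lossdist j T) (regret K T alg) \<ge> Exp (lossdist j T) (\<lambda>l. Exp (hist_dist alg l T) (G T) - (\<Sum>s<T. l s j))"
    by (intro Ex_mono regret_lower j)
  also have "Exp (lossdist j T) (\<lambda>l. Exp (hist_dist alg l T) (G T) - (\<Sum>s<T. l s j)) =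
      Exp (bind_pmf (lossdist j T) (\<lambda>l. hist_dist alg l T)) (G T) - T * (e / 2 - e * d)"
    by (simp add: Ex_diff Ex_bind Ex_lossdist[OF j])
  also have "\<dots> = e * d * (T - (\<Sum>s<T. Exp (sdist j s) (nu j s)))"
    by (simp add: link Ex_G algebra_simps)
  finally show ?thesis .
qed

lemma klc_eq: "klc = ln (1 / (1 - 4 * d\<^sup>2)) / 2"
proof -
  have inj: "inj (\<lambda>b. if b then e else 0)" using e_pos by (auto simp: inj_def split: if_splits)
  have "klc = KL (bernoulli_pmf (1/2)) (bernoulli_pmf (1/2 - d))"
    unfolding klc_def coin_def by (rule KL_map[OF inj]) simp
  also have "\<dots> = (\<Sum>b\<in>UNIV. pmf (bernoulli_pmf (1/2)) b * ln (pmf (bernoulli_pmf (1/2)) b / pmf (bernoulli_pmf (1/2 - d)) b))"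
    unfolding KL_def by (rule Ex_superset) auto
  also have "\<dots> = (ln ((1/2) / (1/2 - d)) + ln ((1/2) / (1/2 + d))) / 2"
    using d_pos d_lt by (simp add: UNIV_bool)
  also have "ln ((1/2) / (1/2 - d)) + ln ((1/2) / (1/2 + d)) = ln (((1/2) / (1/2 - d)) * ((1/2) / (1/2 + d)))"
    using d_pos d_lt by (subst ln_mult) auto
  also have "((1/2) / (1/2 - d)) * ((1/2) / (1/2 + d)) = 1 / (1 - 4 * d\<^sup>2)"
    using d_pos d_lt by (simp add: field_simps power2_eq_square)
  finally show ?thesis .
qed

lemma klc_bounds:
  assumes "d\<^sup>2 \<le> 1/24"
  shows "0 \<le> klc" "klc \<le> 12/5 * d\<^sup>2"
proof -
  have q: "0 < 1 - 4 * d\<^sup>2" "1 - 4 * d\<^sup>2 \<le> 1" "5/6 \<le> 1 - 4 * d\<^sup>2" using assms by auto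
  have "1 \<le> 1 / (1 - 4 * d\<^sup>2)" using q by simp
  then show "0 \<le> klc" unfolding klc_eq by simp
  have "ln (1 / (1 - 4 * d\<^sup>2)) \<le> 1 / (1 - 4 * d\<^sup>2) - 1" using q by (intro ln_le_minus_one) simp
  also have "\<dots> = 4 * d\<^sup>2 / (1 - 4 * d\<^sup>2)" using q by (simp add: field_simps)
  also have "\<dots> \<le> 4 * d\<^sup>2 / (5/6)" using q by (intro divide_left_mono) auto
  finally show "klc \<le> 12/5 * d\<^sup>2" unfolding klc_eq by simp
qed

lemma Ex_ind_bounds:
  "0 \<le> Exp P (\<lambda>x. if Q x then 1 else 0) \<and> Exp P (\<lambda>x. if Q x then 1 else (0::real)) \<le> 1"
  if "finite (set_pmf P)" for P :: "'a pmf" and Q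
proof
  show "0 \<le> Exp P (\<lambda>x. if Q x then 1 else 0)"
    using Ex_mono[of P "\<lambda>_. 0" "\<lambda>x. if Q x then 1 else 0"] Ex_const[OF that, of 0] by simp
  show "Exp P (\<lambda>x. if Q x then 1 else (0::real)) \<le> 1"
    using Ex_mono[of P "\<lambda>x. if Q x then 1 else 0" "\<lambda>_. 1"] Ex_const[OF that, of 1] by simp
qed

lemma nu_bounds: "0 \<le> nu j t h" "nu j t h \<le> 1"
proof -
  have "nu j t h = Exp (alg t h) (\<lambda>x. if fst x = j then 1 else 0)"
    unfolding nu_def by (intro Ex_cong) auto
  then show "0 \<le> nu j t h" "nu j t h \<le> 1" using Ex_ind_bounds[OF fin_alg] by auto
qed

lemma pi_nonneg: "0 \<le> pi j t h"
proof -
  have "pi j t h = Exp (alg t h) (\<lambda>x. if fst x = j \<or> snd x = j then 1 else 0)"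
    unfolding pi_def by (intro Ex_cong) auto
  then show ?thesis using Ex_ind_bounds[OF fin_alg] by auto
qed

lemma sum_nu: "(\<Sum>j\<in>{1..K}. nu j t h) = 1"
proof -
  have "(\<Sum>j\<in>{1..K}. nu j t h) = Exp (alg t h) (\<lambda>x. \<Sum>j\<in>{1..K}. (\<lambda>(a,b). if a = j then 1 else 0) x)"
    unfolding nu_def by (rule Ex_sum[symmetric])
  also have "\<dots> = Exp (alg t h) (\<lambda>_. 1)"
  proof (intro Ex_cong)
    fix x assume x: "x \<in> set_pmf (alg t h)"
    obtain a b where ab: "x = (a,b)" by (cases x)
    have "(a,b) \<in> {1..K} \<times> {1..K}" using x ab alg_sub by blast
    then have "fst x \<in> {1..K}" using ab by simp
    then show "(\<Sum>j\<in>{1..K}. (\<lambda>(a,b). if a = j then 1 else (0::real)) x) = 1"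
      by (simp add: split_beta)
  qed
  also have "\<dots> = 1" by (simp add: Ex_const)
  finally show ?thesis .
qed

lemma sum_pi: "(\<Sum>j\<in>{1..K}. pi j t h) \<le> 2"
proof -
  have "(\<Sum>j\<in>{1..K}. pi j t h) = Exp (alg t h) (\<lambda>x. \<Sum>j\<in>{1..K}. (\<lambda>(a,b). if a = j \<or> b = j then 1 else 0) x)"
    unfolding pi_def by (rule Ex_sum[symmetric])
  also have "\<dots> \<le> Exp (alg t h) (\<lambda>_. 2)"
  proof (intro Ex_mono)
    fix x :: "nat \<times> nat"
    obtain a b where ab: "x = (a,b)" by (cases x)
    have "(\<Sum>j\<in>{1..K}. (if a = j \<or> b = j then 1 else (0::real))) \<le>
          (\<Sum>j\<in>{1..K}. (if a = j then 1 else 0) + (if b = j then 1 else 0))"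
      by (intro sum_mono) auto
    also have "\<dots> \<le> 2" by (simp add: sum.distrib)
    finally show "(\<Sum>j\<in>{1..K}. (\<lambda>(a,b). if a = j \<or> b = j then 1 else (0::real)) x) \<le> 2"
      unfolding ab by simp
  qed
  also have "\<dots> = 2" by (simp add: Ex_const)
  finally show ?thesis .
qed

end



lemma Ex_exists_ge:
  assumes "finite (set_pmf P)" "Exp P f \<ge> B"
  shows "\<exists>x\<in>set_pmf P. f x \<ge> B"
proof (rule ccontr)
  assume "\<not> ?thesis"
  then have lt: "\<And>x. x \<in> set_pmf P \<Longrightarrow> f x < B" by auto
  have "Exp P f < (\<Sum>x\<in>set_pmf P. pmf P x * B)"
    unfolding Exp_def
  proof (rule sum_strict_mono)
    show "finite (set_pmf P)" by fact
    show "set_pmf P \<noteq> {}" by (rule set_pmf_not_empty)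
    fix x assume "x \<in> set_pmf P"
    then show "pmf P x * f x < pmf P x * B" using lt by (simp add: set_pmf_eq' less_le pmf_nonneg)
  qed
  also have "\<dots> = B" using Ex_const[OF assms(1), of B] unfolding Exp_def .
  finally show False using assms(2) by simp
qed

lemma sqrt_le_am: assumes "0 \<le> (x::real)" shows "sqrt x \<le> (7 * x + 1/7) / 2"
proof -
  define s where "s = sqrt x"
  have x: "x = s^2" using assms s_def by simp
  have s0: "s \<ge> 0" using assms s_def by simp
  have "0 \<le> 7 * (s - 1/7)^2" by simp
  then show ?thesis unfolding x s_def[symmetric] using s0 by (simp add: power2_eq_square algebra_simps)
qed

context game begin

lemma W_nonneg: "0 \<le> W j t"
  unfolding W_def
proof (rule sum_nonneg)
  fix r show "0 \<le> Exp (sdist 0 r) (pi j r)"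
    using Ex_mono[of "sdist 0 r" "\<lambda>_. 0" "pi j r"] pi_nonneg Ex_const[of "sdist 0 r" 0] by simp
qed

lemma W_mono: "s \<le> t \<Longrightarrow> W j s \<le> W j t"
  unfolding W_def
proof (rule sum_mono2)
  show "finite {..<t}" by simp
  assume "s \<le> t" then show "{..<s} \<subseteq> {..<t}" by auto
  fix r show "0 \<le> Exp (sdist 0 r) (pi j r)"
    using Ex_mono[of "sdist 0 r" "\<lambda>_. 0" "pi j r"] pi_nonneg Ex_const[of "sdist 0 r" 0] by simp
qed

lemma main:
  assumes K2: "2 \<le> K" and dT: "d\<^sup>2 * T = real K / 256" and d24: "d\<^sup>2 \<le> 1/24" and e1: "e \<le> 1"
  shows "\<exists>l. losses_01 K T l \<and> loss_range_le K T l e \<and> regret K T alg l \<ge> e * d * T * (813/2240)"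
proof -
  define Ej where "Ej j = (\<Sum>s<T. Exp (sdist j s) (nu j s))" for j
  define E0 where "E0 j = (\<Sum>s<T. Exp (sdist 0 s) (nu j s))" for j
  have kl0: "0 \<le> klc" and kl1: "klc \<le> 12/5 * d\<^sup>2" using klc_bounds[OF d24] by auto
  have stepj: "Ej j \<le> E0 j + T * sqrt (klc * W j T)" if j: "j \<in> {1..K}" for j
  proof -
    have "Ej j \<le> (\<Sum>s<T. Exp (sdist 0 s) (nu j s) + sqrt (klc * W j T))"
      unfolding Ej_def
    proof (rule sum_mono)
      fix s assume s: "s \<in> {..<T}"
      have "Exp (sdist j s) (nu j s) - Exp (sdist 0 s) (nu j s) \<le> sqrt (KL (sdist 0 s) (sdist j s))"
        by (rule tv_KL) (auto simp: set_sdist_indep[of j _ 0] nu_bounds)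
      also have "KL (sdist 0 s) (sdist j s) = klc * W j s" using j by (intro KL_sdist) auto
      also have "sqrt (klc * W j s) \<le> sqrt (klc * W j T)"
        using s kl0 by (intro real_sqrt_le_mono mult_left_mono W_mono) auto
      finally show "Exp (sdist j s) (nu j s) \<le> Exp (sdist 0 s) (nu j s) + sqrt (klc * W j T)" by simp
    qed
    also have "\<dots> = E0 j + T * sqrt (klc * W j T)" unfolding E0_def by (simp add: sum.distrib)
    finally show ?thesis .
  qed
  have sumE0: "(\<Sum>j\<in>{1..K}. E0 j) = T"
  proof -
    have "(\<Sum>j\<in>{1..K}. E0 j) = (\<Sum>s<T. Exp (sdist 0 s) (\<lambda>h. \<Sum>j\<in>{1..K}. nu j s h))"
      unfolding E0_def by (subst sum.swap) (simp add: Ex_sum)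
    also have "\<dots> = (\<Sum>s<T. 1)" by (intro sum.cong refl) (simp only: sum_nu Ex_const fin_sdist)
    finally show ?thesis by simp
  qed
  have sumW: "(\<Sum>j\<in>{1..K}. W j T) \<le> 2 * T"
  proof -
    have "(\<Sum>j\<in>{1..K}. W j T) = (\<Sum>r<T. Exp (sdist 0 r) (\<lambda>h. \<Sum>j\<in>{1..K}. pi j r h))"
      unfolding W_def by (subst sum.swap) (simp add: Ex_sum)
    also have "\<dots> \<le> (\<Sum>r<T. 2)"
    proof (rule sum_mono)
      fix r
      have "Exp (sdist 0 r) (\<lambda>h. \<Sum>j\<in>{1..K}. pi j r h) \<le> Exp (sdist 0 r) (\<lambda>_. 2)"
        by (intro Ex_mono sum_pi)
      then show "Exp (sdist 0 r) (\<lambda>h. \<Sum>j\<in>{1..K}. pi j r h) \<le> 2" by (simp add: Ex_const)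
    qed
    finally show ?thesis by simp
  qed
  have sumsq: "(\<Sum>j\<in>{1..K}. sqrt (klc * W j T)) \<le> (14 * klc * T + real K / 7) / 2"
  proof -
    have "(\<Sum>j\<in>{1..K}. sqrt (klc * W j T)) \<le> (\<Sum>j\<in>{1..K}. (7 * (klc * W j T) + 1/7) / 2)"
      using kl0 W_nonneg by (intro sum_mono sqrt_le_am) auto
    also have "\<dots> = (7 * klc * (\<Sum>j\<in>{1..K}. W j T) + real K / 7) / 2"
      by (simp add: sum_divide_distrib[symmetric] sum.distrib sum_distrib_left[symmetric] mult.assoc)
    also have "\<dots> \<le> (7 * klc * (2 * T) + real K / 7) / 2"
      using sumW kl0 by (intro divide_right_mono add_right_mono mult_left_mono) auto
    finally show ?thesis by simp
  qed
  have klT: "klc * T \<le> 3 * real K / 320"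
  proof -
    have "klc * T \<le> 12/5 * d\<^sup>2 * T" using kl1 by (intro mult_right_mono) auto
    also have "\<dots> = 3 * real K / 320" using dT by (simp add: algebra_simps)
    finally show ?thesis .
  qed
  have sumEj: "(\<Sum>j\<in>{1..K}. Ej j) \<le> T + T * (307 * real K / 2240)"
  proof -
    have "(\<Sum>j\<in>{1..K}. Ej j) \<le> (\<Sum>j\<in>{1..K}. E0 j + T * sqrt (klc * W j T))"
      by (intro sum_mono stepj)
    also have "\<dots> = T + T * (\<Sum>j\<in>{1..K}. sqrt (klc * W j T))"
      using sumE0 by (simp add: sum.distrib sum_distrib_left)
    also have "\<dots> \<le> T + T * ((14 * klc * T + real K / 7) / 2)"
      using sumsq by (intro add_left_mono mult_left_mono) auto
    also have "\<dots> \<le> T + T * (307 * real K / 2240)"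
    proof -
      have "(14 * klc * T + real K / 7) / 2 \<le> 307 * real K / 2240" using klT by (simp add: field_simps)
      then show ?thesis by (intro add_left_mono mult_left_mono) auto
    qed
    finally show ?thesis .
  qed
  define B where "B = e * d * T * (813/2240)"
  have "\<exists>j\<in>{1..K}. e * d * (T - Ej j) \<ge> B"
  proof (rule ccontr)
    assume "\<not> ?thesis"
    then have lt: "\<And>j. j \<in> {1..K} \<Longrightarrow> e * d * (T - Ej j) < B" by (meson not_le)
    have "(\<Sum>j\<in>{1..K}. e * d * (T - Ej j)) < (\<Sum>j\<in>{1..K}. B)"
      using K2 by (intro sum_strict_mono lt) auto
    moreover have "(\<Sum>j\<in>{1..K}. e * d * (T - Ej j)) = e * d * (real K * real T - (\<Sum>j\<in>{1..K}. Ej j))"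
      by (simp add: sum_distrib_left[symmetric] sum_subtractf)
    moreover have "e * d * (real K * real T - (\<Sum>j\<in>{1..K}. Ej j)) \<ge> e * d * (real K * real T * (813/2240))"
    proof (intro mult_left_mono)
      have "2 * real T \<le> real K * real T" using K2 by (intro mult_right_mono) auto
      moreover have "T * (307 * real K / 2240) = 307/2240 * (real K * real T)" by simp
      ultimately show "real K * real T * (813/2240) \<le> real K * real T - (\<Sum>j\<in>{1..K}. Ej j)" using sumEj by linarith
      show "0 \<le> e * d" using e_pos d_pos by simp
    qed
    ultimately show False unfolding B_def by (simp add: algebra_simps)
  qed
  then obtain j where j: "j \<in> {1..K}" and jB: "e * d * (T - Ej j) \<ge> B" by blast
  have "Exp (lossdist j T) (regret K T alg) \<ge> B" using Ex_regret[where T=T, OF j] jB unfolding Ej_def by linarith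
  then obtain l where l: "l \<in> set_pmf (lossdist j T)" and lB: "regret K T alg l \<ge> B"
    using Ex_exists_ge[OF fin_lossdist] by blast
  have vals: "\<And>s a. l s a \<in> {0, e}" using loss_vals[OF l] .
  have vals': "\<And>s a. l s a = 0 \<or> l s a = e" using vals by blast
  have "losses_01 K T l" unfolding losses_01_def
  proof (intro allI impI ballI)
    fix t a
    show "0 \<le> l t a \<and> l t a \<le> 1" using vals'[of t a] e_pos e1 by auto
  qed
  moreover have "loss_range_le K T l e" unfolding loss_range_le_def
  proof (intro allI impI ballI)
    fix t a a'
    show "\<bar>l t a - l t a'\<bar> \<le> e" using vals'[of t a] vals'[of t a'] e_pos by auto
  qed
  ultimately show ?thesis using lB unfolding B_def by blast
qed

end

theorem theorem2:
  fixes K T :: nat and eps :: real and alg :: algo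
  assumes "K \<ge> 2"
    and "0 < eps" and "eps \<le> 1"
    and "real T \<ge> 3 * real K / 32"
    and "valid_algo K alg"
  shows "\<exists>l. losses_01 K T l \<and> loss_range_le K T l eps \<and>
             regret K T alg l \<ge> 0.02 * eps * sqrt (real K * real T)"
proof -
  have K2: "2 \<le> K" and e0: "0 < eps" and e1: "eps \<le> 1" and TK: "real T \<ge> 3 * real K / 32"
    and va: "valid_algo K alg" using assms by auto
  have Tpos: "real T > 0" using K2 TK by linarith
  define d where "d = sqrt (real K * real T) / (16 * real T)"
  have KTpos: "real K * real T > 0" using K2 Tpos by simp
  have d0: "0 < d" unfolding d_def using KTpos Tpos by simp
  have d2: "d\<^sup>2 = real K / (256 * real T)"
    unfolding d_def using KTpos Tpos by (simp add: power_divide power_mult_distrib power2_eq_square)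
  have dT: "d\<^sup>2 * T = real K / 256" unfolding d2 using Tpos by (simp add: field_simps)
  have d24: "d\<^sup>2 \<le> 1/24" unfolding d2 using TK Tpos by (simp add: field_simps)
  have dlt: "d < 1/2"
  proof (rule ccontr)
    assume "\<not> d < 1/2"
    then have "1/2 \<le> d" by simp
    then have "(1/2)\<^sup>2 \<le> d\<^sup>2" by (intro power_mono) auto
    moreover have "(1/2::real)\<^sup>2 = 1/4" by (simp add: power2_eq_square)
    ultimately show False using d24 by linarith
  qed
  interpret game K alg eps d
    using va e0 d0 dlt by unfold_locales auto
  obtain l where l: "losses_01 K T l" "loss_range_le K T l eps" and r: "regret K T alg l \<ge> eps * d * T * (813/2240)"
    using main[OF K2 dT d24 e1] by blast
  have "d * T = sqrt (real K * real T) / 16" unfolding d_def using Tpos by simp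
  then have eq: "eps * d * T * (813/2240) = (813/35840) * (eps * sqrt (real K * real T))"
    by (simp add: algebra_simps)
  have s0: "0 \<le> eps * sqrt (real K * real T)" using e0 by simp
  have "(0.02::real) * (eps * sqrt (real K * real T)) \<le> (813/35840) * (eps * sqrt (real K * real T))"
    by (rule mult_right_mono[OF _ s0]) simp
  moreover have "0.02 * eps * sqrt (real K * real T) = (0.02::real) * (eps * sqrt (real K * real T))"
    by (simp add: mult.assoc)
  ultimately have "0.02 * eps * sqrt (real K * real T) \<le> regret K T alg l"
    using r eq by linarith
  then show ?thesis using l by blast
qed

end
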